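(* Let $K$ be a perfect field. Then $K[X_1]^{G_1}=K[a_1,\Delta]$ if $\mathrm{char}(K)=2$, and $K[X_1]^{G_1}=K[b_2,\Delta]$ if $\mathrm{char}(K)=3$.
   Context: $K[X_1]=K[a_1,a_2,a_3,a_4,a_6]$ is the coordinate ring of the space of Weierstrass equations $y^2+a_1xy+a_3y=x^3+a_2x^2+a_4x+a_6$. $G_1$ is the group of substitutions $[1;r,s,t]$: $x=x'+r$, $y=y'+sx'+t$, acting on the coefficients; $K[X_1]^{G_1}$ is the ring of polynomials $F$ with $F\circ g=F$ for all $g\in G_1(\overline K)$. Here $b_2=a_1^2+4a_2$, $b_4=2a_4+a_1a_3$, $b_6=a_3^2+4a_6$, $b_8=a_1^2a_6+4a_2a_6-a_1a_3a_4+a_2a_3^2-a_4^2$, and $\Delta=-b_2^2b_8-8b_4^3-27b_6^2+9b_2b_4b_6$. *)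

theory Defs
  imports "HOL-Library.Poly_Mapping" "HOL-Algebra.Algebraic_Closure_Type"
begin

type_synonym 'a mpoly = "(nat \<Rightarrow>\<^sub>0 nat) \<Rightarrow>\<^sub>0 'a"

definition mVar :: "nat \<Rightarrow> 'a::comm_ring_1 mpoly" where
  "mVar i = Poly_Mapping.single (Poly_Mapping.single i 1) 1"

definition mConst :: "'a::comm_ring_1 \<Rightarrow> 'a mpoly" where
  "mConst c = Poly_Mapping.single 0 c"

definition mvars :: "'a::zero mpoly \<Rightarrow> nat set" where
  "mvars p = \<Union> (Poly_Mapping.keys ` Poly_Mapping.keys p)"

definition minsert :: "('a::zero \<Rightarrow> 'b::comm_ring_1) \<Rightarrow> (nat \<Rightarrow> 'b) \<Rightarrow> 'a mpoly \<Rightarrow> 'b" where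
  "minsert f v p = (\<Sum>m\<in>Poly_Mapping.keys p. f (Poly_Mapping.lookup p m) * (\<Prod>i\<in>Poly_Mapping.keys m. v i ^ Poly_Mapping.lookup m i))"

definition wa1 :: "'a::comm_ring_1 mpoly" where "wa1 = mVar 0"
definition wa2 :: "'a::comm_ring_1 mpoly" where "wa2 = mVar 1"
definition wa3 :: "'a::comm_ring_1 mpoly" where "wa3 = mVar 2"
definition wa4 :: "'a::comm_ring_1 mpoly" where "wa4 = mVar 3"
definition wa6 :: "'a::comm_ring_1 mpoly" where "wa6 = mVar 4"

definition wb2 :: "'a::comm_ring_1 mpoly" where "wb2 = wa1^2 + 4*wa2"
definition wb4 :: "'a::comm_ring_1 mpoly" where "wb4 = 2*wa4 + wa1*wa3"
definition wb6 :: "'a::comm_ring_1 mpoly" where "wb6 = wa3^2 + 4*wa6"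
definition wb8 :: "'a::comm_ring_1 mpoly" where
  "wb8 = wa1^2*wa6 + 4*wa2*wa6 - wa1*wa3*wa4 + wa2*wa3^2 - wa4^2"
definition wDelta :: "'a::comm_ring_1 mpoly" where
  "wDelta = - (wb2^2*wb8) - 8*wb4^3 - 27*wb6^2 + 9*wb2*wb4*wb6"

definition KX1 :: "'a::comm_ring_1 mpoly set" where
  "KX1 = {p. mvars p \<subseteq> {0..4}}"

text \<open>The substitution [1;r,s,t] acting on the coefficients (u = 1 in the standard
  transformation formulas), as polynomials over the algebraic closure.\<close>
definition gsub :: "'b::comm_ring_1 \<Rightarrow> 'b \<Rightarrow> 'b \<Rightarrow> nat \<Rightarrow> 'b mpoly" where
  "gsub r s t i =
    (let R = mConst r; S = mConst s; T = mConst t in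
     if i = 0 then wa1 + 2*S
     else if i = 1 then wa2 - S*wa1 + 3*R - S^2
     else if i = 2 then wa3 + R*wa1 + 2*T
     else if i = 3 then wa4 - S*wa3 + 2*R*wa2 - (T + R*S)*wa1 + 3*R^2 - 2*S*T
     else if i = 4 then wa6 + R*wa4 + R^2*wa2 + R^3 - T*wa3 - T^2 - R*T*wa1
     else mVar i)"

definition to_acp :: "'a::field mpoly \<Rightarrow> 'a alg_closure mpoly" where
  "to_acp p = minsert (\<lambda>c. mConst (to_ac c)) mVar p"

definition gact :: "'a::field alg_closure \<Rightarrow> 'a alg_closure \<Rightarrow> 'a alg_closure \<Rightarrow> 'a mpoly \<Rightarrow> 'a alg_closure mpoly" where
  "gact r s t F = minsert (\<lambda>c. mConst (to_ac c)) (gsub r s t) F"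

definition G1_invariants :: "'a::field mpoly set" where
  "G1_invariants = {F \<in> KX1. \<forall>r s t :: 'a alg_closure. gact r s t F = to_acp F}"

definition alg_gen :: "'a::comm_ring_1 mpoly list \<Rightarrow> 'a mpoly set" where
  "alg_gen gs = {minsert mConst (\<lambda>i. if i < length gs then gs ! i else 0) P | P.
                  mvars P \<subseteq> {..<length gs}}"

definition perfect_field :: "'a::field itself \<Rightarrow> bool" where
  "perfect_field _ \<longleftrightarrow> CHAR('a) = 0 \<or> (\<forall>x::'a. \<exists>y. y ^ CHAR('a) = x)"

end

theory Submission
  imports Defs
begin


definition rhom :: "('a::comm_ring_1 \<Rightarrow> 'b::comm_ring_1) \<Rightarrow> bool" where
  "rhom h \<longleftrightarrow> (\<forall>x y. h (x + y) = h x + h y) \<and> (\<forall>x y. h (x * y) = h x * h y) \<and> h 1 = 1"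

lemma rhom_add: "rhom h \<Longrightarrow> h (x + y) = h x + h y" by (simp add: rhom_def)
lemma rhom_mult: "rhom h \<Longrightarrow> h (x * y) = h x * h y" by (simp add: rhom_def)
lemma rhom_1: "rhom h \<Longrightarrow> h 1 = 1" by (simp add: rhom_def)
lemma rhom_0: "rhom h \<Longrightarrow> h 0 = 0"
  using rhom_add[of h 0 0] by simp
lemma rhom_uminus: "rhom h \<Longrightarrow> h (- x) = - h x"
  using rhom_add[of h x "-x"] rhom_0[of h] by (simp add: eq_neg_iff_add_eq_0 add.commute)
lemma rhom_diff: "rhom h \<Longrightarrow> h (x - y) = h x - h y"
  using rhom_add[of h x "-y"] rhom_uminus[of h y] by simp
lemma rhom_power: "rhom h \<Longrightarrow> h (x ^ n) = h x ^ n"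
  by (induct n) (simp_all add: rhom_1 rhom_mult)
lemma rhom_sum: "rhom h \<Longrightarrow> h (\<Sum>i\<in>A. f i) = (\<Sum>i\<in>A. h (f i))"
  by (induct A rule: infinite_finite_induct) (simp_all add: rhom_0 rhom_add)
lemma rhom_prod: "rhom h \<Longrightarrow> h (\<Prod>i\<in>A. f i) = (\<Prod>i\<in>A. h (f i))"
  by (induct A rule: infinite_finite_induct) (simp_all add: rhom_1 rhom_mult)
lemma rhom_of_nat: "rhom h \<Longrightarrow> h (of_nat n) = of_nat n"
  by (induct n) (simp_all add: rhom_0 rhom_1 rhom_add)
lemma rhom_numeral: "rhom h \<Longrightarrow> h (numeral n) = numeral n"
  using rhom_of_nat[of h "numeral n"] by simp
lemma rhom_comp: "rhom f \<Longrightarrow> rhom g \<Longrightarrow> rhom (g \<circ> f)"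
  by (simp add: rhom_def)
lemma rhom_id: "rhom (\<lambda>x. x)" by (simp add: rhom_def)

lemmas rhom_simps = rhom_add rhom_mult rhom_1 rhom_0 rhom_uminus rhom_diff rhom_power
  rhom_numeral rhom_of_nat

lemma rhom_to_ac: "rhom to_ac" by (simp add: rhom_def)

lemma rhom_mConst: "rhom mConst"
  by (simp add: rhom_def mConst_def single_add mult_single)

lemma rhom_pconst: "rhom (\<lambda>c. [:c:])"
  by (simp add: rhom_def)

lemma rhom_poly: "rhom (\<lambda>q. poly q u)"
  by (simp add: rhom_def)

lemma rhom_map_poly: assumes h: "rhom h" shows "rhom (map_poly h)"
proof -
  have h0: "h 0 = 0" using h by (rule rhom_0)
  show ?thesis unfolding rhom_def
  proof (intro conjI allI)
    fix x y show "map_poly h (x + y) = map_poly h x + map_poly h y"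
      by (rule poly_eqI) (simp add: coeff_map_poly h0 rhom_add[OF h])
  next
    fix x y show "map_poly h (x * y) = map_poly h x * map_poly h y"
      by (rule poly_eqI) (simp add: coeff_map_poly h0 coeff_mult rhom_sum[OF h] rhom_mult[OF h])
  next
    show "map_poly h 1 = 1" by (simp add: rhom_1[OF h])
  qed
qed

subsection \<open>Monomials and evaluation\<close>

definition mon :: "(nat \<Rightarrow> 'b::comm_ring_1) \<Rightarrow> (nat \<Rightarrow>\<^sub>0 nat) \<Rightarrow> 'b" where
  "mon v m = (\<Prod>i\<in>Poly_Mapping.keys m. v i ^ Poly_Mapping.lookup m i)"

lemma mon_superset:
  assumes "finite S" "Poly_Mapping.keys m \<subseteq> S"
  shows "mon v m = (\<Prod>i\<in>S. v i ^ Poly_Mapping.lookup m i)"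
  unfolding mon_def
  by (rule prod.mono_neutral_left[OF assms(1) assms(2)]) (simp add: in_keys_iff)

lemma mon_add: "mon v (m + n) = mon v m * mon v n"
proof -
  let ?S = "Poly_Mapping.keys m \<union> Poly_Mapping.keys n"
  have f: "finite ?S" by simp
  have "mon v (m + n) = (\<Prod>i\<in>?S. v i ^ Poly_Mapping.lookup (m + n) i)"
    by (rule mon_superset[OF f]) (rule keys_add)
  also have "\<dots> = (\<Prod>i\<in>?S. v i ^ Poly_Mapping.lookup m i * v i ^ Poly_Mapping.lookup n i)"
    by (simp add: lookup_add power_add)
  also have "\<dots> = mon v m * mon v n"
    by (simp add: prod.distrib mon_superset[OF f])
  finally show ?thesis .
qed

lemma mon_zero [simp]: "mon v 0 = 1" by (simp add: mon_def)

lemma mon_single: "mon v (Poly_Mapping.single i k) = v i ^ k"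
  by (simp add: mon_def)

lemma minsert_mon: "minsert f v p = (\<Sum>m\<in>Poly_Mapping.keys p. f (Poly_Mapping.lookup p m) * mon v m)"
  by (simp add: minsert_def mon_def)

lemma minsert_superset:
  assumes "f 0 = 0" "finite S" "Poly_Mapping.keys p \<subseteq> S"
  shows "minsert f v p = (\<Sum>m\<in>S. f (Poly_Mapping.lookup p m) * mon v m)"
  unfolding minsert_mon
  by (rule sum.mono_neutral_left[OF assms(2) assms(3)]) (simp add: in_keys_iff assms(1))

lemma minsert_add:
  assumes h: "rhom f"
  shows "minsert f v (p + q) = minsert f v p + minsert f v q"
proof -
  let ?S = "Poly_Mapping.keys p \<union> Poly_Mapping.keys q"
  have f: "finite ?S" by simp
  have f0: "f 0 = 0" using h by (rule rhom_0)
  show ?thesis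
    using keys_add[of p q]
    by (simp add: minsert_superset[of f, OF f0 f] lookup_add rhom_add[OF h] distrib_right sum.distrib)
qed

lemma minsert_zero [simp]: "minsert f v 0 = 0" by (simp add: minsert_def)

lemma minsert_single:
  assumes "f 0 = 0" shows "minsert f v (Poly_Mapping.single m c) = f c * mon v m"
  by (cases "c = 0") (simp_all add: minsert_mon assms)

lemma minsert_sum:
  assumes h: "rhom f"
  shows "minsert f v (\<Sum>i\<in>A. g i) = (\<Sum>i\<in>A. minsert f v (g i))"
  by (induct A rule: infinite_finite_induct) (simp_all add: minsert_add[OF h])

lemma pm_expand: "(p :: 'a \<Rightarrow>\<^sub>0 'b::comm_monoid_add) = (\<Sum>m\<in>Poly_Mapping.keys p. Poly_Mapping.single m (Poly_Mapping.lookup p m))"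
proof (rule poly_mapping_eqI)
  fix k
  show "Poly_Mapping.lookup p k = Poly_Mapping.lookup (\<Sum>m\<in>Poly_Mapping.keys p. Poly_Mapping.single m (Poly_Mapping.lookup p m)) k"
    by (cases "k \<in> Poly_Mapping.keys p")
       (simp_all add: lookup_sum lookup_single when_def sum.delta in_keys_iff)
qed

lemma minsert_mult:
  assumes h: "rhom f"
  shows "minsert f v (p * q) = minsert f v p * minsert f v q"
proof -
  have f0: "f 0 = 0" using h by (rule rhom_0)
  let ?P = "Poly_Mapping.keys p" and ?Q = "Poly_Mapping.keys q"
  let ?a = "Poly_Mapping.lookup p" and ?b = "Poly_Mapping.lookup q"
  have "p * q = (\<Sum>m\<in>?P. Poly_Mapping.single m (?a m)) * (\<Sum>n\<in>?Q. Poly_Mapping.single n (?b n))"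
    using pm_expand[of p] pm_expand[of q] by simp
  also have "\<dots> = (\<Sum>m\<in>?P. \<Sum>n\<in>?Q. Poly_Mapping.single (m + n) (?a m * ?b n))"
    by (simp add: sum_product mult_single)
  finally have pq: "p * q = \<dots>" .
  have "minsert f v (p * q) = (\<Sum>m\<in>?P. \<Sum>n\<in>?Q. f (?a m * ?b n) * mon v (m + n))"
    unfolding pq by (simp add: minsert_sum[OF h] minsert_single[of f, OF f0])
  also have "\<dots> = (\<Sum>m\<in>?P. \<Sum>n\<in>?Q. (f (?a m) * mon v m) * (f (?b n) * mon v n))"
    by (simp add: rhom_mult[OF h] mon_add mult_ac)
  also have "\<dots> = minsert f v p * minsert f v q"
    by (simp add: minsert_mon sum_product)
  finally show ?thesis .
qed

lemma minsert_one: assumes h: "rhom f" shows "minsert f v 1 = 1"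
proof -
  have "(1 :: 'a mpoly) = Poly_Mapping.single 0 1" by simp
  then show ?thesis using minsert_single[of f v 0 1] rhom_0[OF h] rhom_1[OF h] by simp
qed

lemma rhom_minsert: "rhom f \<Longrightarrow> rhom (minsert f v)"
  unfolding rhom_def[of "minsert f v"]
  by (simp add: minsert_add minsert_mult minsert_one)

lemma minsert_mVar: "rhom f \<Longrightarrow> minsert f v (mVar i) = v i"
  by (simp add: mVar_def minsert_single rhom_0 rhom_1 mon_single)

lemma minsert_mConst: "rhom f \<Longrightarrow> minsert f v (mConst c) = f c"
  by (simp add: mConst_def minsert_single rhom_0)

lemma minsert_comp:
  assumes h: "rhom h"
  shows "h (minsert f v p) = minsert (h \<circ> f) (h \<circ> v) p"
  by (simp add: minsert_def rhom_sum[OF h] rhom_mult[OF h] rhom_prod[OF h] rhom_power[OF h])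

lemma minsert_comp':
  assumes h: "rhom h"
  shows "h (minsert f v p) = minsert (\<lambda>c. h (f c)) (\<lambda>i. h (v i)) p"
  using minsert_comp[OF h] by (simp add: comp_def)

lemma minsert_cong:
  assumes "\<And>c. f c = g c" "\<And>i. i \<in> mvars p \<Longrightarrow> v i = w i"
  shows "minsert f v p = minsert g w p"
  unfolding minsert_def
proof (rule sum.cong[OF refl])
  fix m assume m: "m \<in> Poly_Mapping.keys p"
  have "(\<Prod>i\<in>Poly_Mapping.keys m. v i ^ Poly_Mapping.lookup m i) = (\<Prod>i\<in>Poly_Mapping.keys m. w i ^ Poly_Mapping.lookup m i)"
    by (rule prod.cong[OF refl]) (use m assms(2) in \<open>auto simp: mvars_def intro!: arg_cong[where f="\<lambda>z. z ^ _"]\<close>)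
  then show "f (Poly_Mapping.lookup p m) * (\<Prod>i\<in>Poly_Mapping.keys m. v i ^ Poly_Mapping.lookup m i) =
     g (Poly_Mapping.lookup p m) * (\<Prod>i\<in>Poly_Mapping.keys m. w i ^ Poly_Mapping.lookup m i)"
    by (simp add: assms(1))
qed

lemma single_pow: "(mVar i :: 'a::comm_ring_1 mpoly) ^ k
   = Poly_Mapping.single (Poly_Mapping.single i k) 1"
  by (induct k) (simp_all add: mVar_def mult_single single_add[symmetric])

lemma prod_single: "finite A \<Longrightarrow> (\<Prod>i\<in>A. Poly_Mapping.single (g i) (1::'a::comm_ring_1))
   = Poly_Mapping.single (\<Sum>i\<in>A. g i) 1"
  by (induct A rule: finite_induct) (simp_all add: mult_single)

lemma mon_mVar: "mon mVar m = (Poly_Mapping.single m 1 :: 'a::comm_ring_1 mpoly)"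
proof -
  have "mon mVar m = (\<Prod>i\<in>Poly_Mapping.keys m. Poly_Mapping.single (Poly_Mapping.single i (Poly_Mapping.lookup m i)) (1::'a))"
    by (simp add: mon_def single_pow)
  also have "\<dots> = Poly_Mapping.single (\<Sum>i\<in>Poly_Mapping.keys m. Poly_Mapping.single i (Poly_Mapping.lookup m i)) 1"
    by (simp add: prod_single)
  also have "\<dots> = Poly_Mapping.single m 1" using pm_expand[of m] by simp
  finally show ?thesis .
qed

lemma minsert_hConst_mVar:
  "minsert (\<lambda>c. mConst (h c)) mVar p = (\<Sum>m\<in>Poly_Mapping.keys p. Poly_Mapping.single m (h (Poly_Mapping.lookup p m)))"
  by (simp add: minsert_mon mon_mVar mConst_def mult_single)

lemma minsert_mConst_mVar: "minsert mConst mVar p = p"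
  using minsert_hConst_mVar[of "\<lambda>c. c" p] pm_expand[of p] by simp

lemma minsert_hConst_inj:
  assumes "inj h" "h 0 = 0" "minsert (\<lambda>c. mConst (h c)) mVar p = 0"
  shows "p = 0"
proof (rule poly_mapping_eqI)
  fix k
  have "Poly_Mapping.lookup (minsert (\<lambda>c. mConst (h c)) mVar p) k = 0" using assms(3) by simp
  then have "(if k \<in> Poly_Mapping.keys p then h (Poly_Mapping.lookup p k) else 0) = 0"
    unfolding minsert_hConst_mVar
    by (simp add: lookup_sum lookup_single when_def sum.delta)
  then show "Poly_Mapping.lookup p k = Poly_Mapping.lookup 0 k"
    using assms(1,2) by (auto simp: in_keys_iff inj_eq dest: injD[of h _ 0])
qed




definition sclosed :: "'b::comm_ring_1 set \<Rightarrow> bool" where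
  "sclosed R \<longleftrightarrow> 0 \<in> R \<and> 1 \<in> R \<and> (\<forall>x\<in>R. \<forall>y\<in>R. x + y \<in> R \<and> x * y \<in> R)"

lemma sclosed_sum: "sclosed R \<Longrightarrow> (\<And>i. i \<in> A \<Longrightarrow> g i \<in> R) \<Longrightarrow> (\<Sum>i\<in>A. g i) \<in> R"
  by (induct A rule: infinite_finite_induct) (auto simp: sclosed_def)
lemma sclosed_prod: "sclosed R \<Longrightarrow> (\<And>i. i \<in> A \<Longrightarrow> g i \<in> R) \<Longrightarrow> (\<Prod>i\<in>A. g i) \<in> R"
  by (induct A rule: infinite_finite_induct) (auto simp: sclosed_def)
lemma sclosed_power: "sclosed R \<Longrightarrow> x \<in> R \<Longrightarrow> x ^ n \<in> R"
  by (induct n) (auto simp: sclosed_def)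

lemma minsert_in:
  assumes R: "sclosed R" and f: "\<And>c. f c \<in> R" and v: "\<And>i. i \<in> mvars p \<Longrightarrow> v i \<in> R"
  shows "minsert f v p \<in> R"
  unfolding minsert_def
proof (rule sclosed_sum[OF R])
  fix m assume m: "m \<in> Poly_Mapping.keys p"
  have "(\<Prod>i\<in>Poly_Mapping.keys m. v i ^ Poly_Mapping.lookup m i) \<in> R"
    by (rule sclosed_prod[OF R], rule sclosed_power[OF R], rule v) (use m in \<open>auto simp: mvars_def\<close>)
  then show "f (Poly_Mapping.lookup p m) * (\<Prod>i\<in>Poly_Mapping.keys m. v i ^ Poly_Mapping.lookup m i) \<in> R"
    using R f by (simp add: sclosed_def)
qed

lemma mvars_add: "mvars (p + q) \<subseteq> mvars p \<union> mvars q"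
  unfolding mvars_def using keys_add[of p q] by auto

lemma mvars_mult: "mvars (p * q) \<subseteq> mvars p \<union> mvars q"
proof
  fix i assume "i \<in> mvars (p * q)"
  then obtain m where m: "m \<in> Poly_Mapping.keys (p * q)" "i \<in> Poly_Mapping.keys m"
    by (auto simp: mvars_def)
  then obtain a b where ab: "m = a + b" "a \<in> Poly_Mapping.keys p" "b \<in> Poly_Mapping.keys q"
    using keys_mult[of p q] by blast
  then have "i \<in> Poly_Mapping.keys a \<union> Poly_Mapping.keys b" using m(2) keys_add[of a b] by auto
  then show "i \<in> mvars p \<union> mvars q" using ab by (auto simp: mvars_def)
qed

lemma mvars_0 [simp]: "mvars 0 = {}" by (simp add: mvars_def)
lemma mvars_1 [simp]: "mvars 1 = {}" by (simp add: mvars_def)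
lemma mvars_mVar [simp]: "mvars (mVar i :: 'a::comm_ring_1 mpoly) = {i}" by (simp add: mvars_def mVar_def)
lemma mvars_mConst [simp]: "mvars (mConst c :: 'a::comm_ring_1 mpoly) = {}" by (simp add: mvars_def mConst_def)
lemma keys_uminus_pm: "Poly_Mapping.keys (- p) = Poly_Mapping.keys (p :: 'a \<Rightarrow>\<^sub>0 'b::ab_group_add)"
  by (auto simp: in_keys_iff)
lemma mvars_uminus [simp]: "mvars (- p) = mvars (p :: 'a::comm_ring_1 mpoly)"
  by (simp add: mvars_def keys_uminus_pm)
lemma finite_mvars: "finite (mvars p)" by (simp add: mvars_def)

lemma sclosed_MV: "sclosed {p :: 'a::comm_ring_1 mpoly. mvars p \<subseteq> V}"
  using mvars_add mvars_mult by (fastforce simp: sclosed_def)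

lemma MV_add: "mvars p \<subseteq> V \<Longrightarrow> mvars q \<subseteq> V \<Longrightarrow> mvars (p + q) \<subseteq> V"
  using mvars_add by blast
lemma MV_mult: "mvars p \<subseteq> V \<Longrightarrow> mvars q \<subseteq> V \<Longrightarrow> mvars (p * q) \<subseteq> V"
  using mvars_mult by blast
lemma MV_diff: "mvars p \<subseteq> V \<Longrightarrow> mvars q \<subseteq> V \<Longrightarrow> mvars (p - q :: 'a::comm_ring_1 mpoly) \<subseteq> V"
  using MV_add[of p V "-q"] by simp
lemma MV_uminus: "mvars p \<subseteq> V \<Longrightarrow> mvars (- p :: 'a::comm_ring_1 mpoly) \<subseteq> V" by simp
lemma MV_power: "mvars p \<subseteq> V \<Longrightarrow> mvars (p ^ n :: 'a::comm_ring_1 mpoly) \<subseteq> V"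
  using sclosed_power[OF sclosed_MV, of p V n] by simp
lemma MV_of_nat: "mvars (of_nat n :: 'a::comm_ring_1 mpoly) \<subseteq> V"
proof (induct n)
  case (Suc n)
  then show ?case using MV_add[of 1 V "of_nat n"] by simp
qed simp
lemma MV_numeral: "mvars (numeral n :: 'a::comm_ring_1 mpoly) \<subseteq> V"
  using MV_of_nat[of "numeral n" V] by simp
lemma MV_mVar: "i \<in> V \<Longrightarrow> mvars (mVar i :: 'a::comm_ring_1 mpoly) \<subseteq> V" by simp
lemma MV_mConst: "mvars (mConst c :: 'a::comm_ring_1 mpoly) \<subseteq> V" by simp

lemmas MV_intros = MV_add MV_mult MV_diff MV_uminus MV_power MV_numeral MV_mVar MV_mConst

subsection \<open>Vanishing\<close>

definition ev :: "(nat \<Rightarrow> 'k::comm_ring_1) \<Rightarrow> 'k mpoly \<Rightarrow> 'k" where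
  "ev x p = minsert (\<lambda>c. c) x p"

lemma rhom_ev: "rhom (ev x)" unfolding ev_def by (rule rhom_minsert[OF rhom_id])

lemma ev_mVar [simp]: "ev x (mVar i) = x i" by (simp add: ev_def minsert_mVar rhom_id)
lemma ev_mConst [simp]: "ev x (mConst c) = c" by (simp add: ev_def minsert_mConst rhom_id)

lemma ev_minsert: "rhom f \<Longrightarrow> ev x (minsert f v p) = minsert (\<lambda>c. ev x (f c)) (\<lambda>i. ev x (v i)) p"
  by (rule minsert_comp'[OF rhom_ev])

lemma poly_roots_infinite_0:
  fixes q :: "'k::idom poly"
  assumes "infinite {u. poly q u = 0}" shows "q = 0"
  using poly_roots_finite assms by blast

lemma vanish_aux:
  fixes p :: "'k::idom mpoly"
  assumes inf: "infinite (UNIV :: 'k set)"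
  shows "mvars p \<subseteq> {..<n} \<Longrightarrow> (\<And>x. ev x p = 0) \<Longrightarrow> p = 0"
proof (induct n arbitrary: p)
  case 0
  then have k0: "\<And>m. m \<in> Poly_Mapping.keys p \<Longrightarrow> m = 0"
    by (auto simp: mvars_def)
  then have ks: "Poly_Mapping.keys p \<subseteq> {0}" by auto
  have "ev (\<lambda>_. 0) p = Poly_Mapping.lookup p 0"
    unfolding ev_def by (subst minsert_superset[of "\<lambda>c. c", OF _ _ ks]) simp_all
  then have "Poly_Mapping.lookup p 0 = 0" using 0 by simp
  then show "p = 0" using ks
    by (intro poly_mapping_eqI) (metis in_keys_iff lookup_zero singletonD subsetD)
next
  case (Suc n)
  define Phi where "Phi = minsert (\<lambda>c. [:mConst c:]) (\<lambda>j. if j = n then [:0,1:] else [:mVar j:]) p"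
  have rc: "rhom (\<lambda>c::'k. [:mConst c:])"
    using rhom_comp[OF rhom_mConst rhom_pconst] by (simp add: comp_def)
  have e: "(\<lambda>i. poly (if i = n then [:0,1:] else [:mVar i:]) (mVar n)) = (mVar :: nat \<Rightarrow> 'k mpoly)"
    by (auto simp: fun_eq_iff)
  have bk: "poly Phi (mVar n) = p"
    unfolding Phi_def minsert_comp'[OF rhom_poly] by (simp add: e minsert_mConst_mVar)
  have cmv: "mvars (coeff Phi k) \<subseteq> {..<n}" for k
  proof -
    let ?R = "{q :: 'k mpoly poly. \<forall>k. mvars (coeff q k) \<subseteq> {..<n}}"
    have R: "sclosed ?R" unfolding sclosed_def
    proof (intro conjI ballI)
      show "0 \<in> ?R" by simp
      show "1 \<in> ?R" by (simp add: coeff_1)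
    next
      fix x y assume x: "x \<in> ?R" and y: "y \<in> ?R"
      show "x + y \<in> ?R"
      proof (simp, intro allI)
        fix k show "mvars (coeff x k + coeff y k) \<subseteq> {..<n}" using x y by (intro MV_add) auto
      qed
      show "x * y \<in> ?R"
      proof (simp only: mem_Collect_eq coeff_mult, intro allI)
        fix k
        have "(\<Sum>i\<le>k. coeff x i * coeff y (k - i)) \<in> {p. mvars p \<subseteq> {..<n}}"
          by (rule sclosed_sum[OF sclosed_MV]) (use x y in \<open>simp add: MV_mult\<close>)
        then show "mvars (\<Sum>i\<le>k. coeff x i * coeff y (k - i)) \<subseteq> {..<n}" by simp
      qed
    qed
    have "Phi \<in> ?R" unfolding Phi_def
    proof (rule minsert_in[OF R])
      fix c :: 'k show "[:mConst c:] \<in> ?R" by (simp add: coeff_pCons split: nat.split)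
    next
      fix i assume i: "i \<in> mvars p"
      then have "i < Suc n" using Suc.prems by auto
      then show "(if i = n then [:0, 1:] else [:mVar i:]) \<in> ?R"
        by (auto simp: coeff_pCons split: nat.split)
    qed
    then show ?thesis by simp
  qed
  have "coeff Phi k = 0" for k
  proof (rule Suc.hyps[OF cmv])
    fix x
    define L where "L = minsert (\<lambda>c. [:c:]) (\<lambda>j. if j = n then [:0,1:] else [:x j:]) p"
    have mp: "map_poly (ev x) [:c:] = [:ev x c:]" for c
      by (rule poly_eqI) (simp add: coeff_map_poly rhom_0[OF rhom_ev] coeff_pCons split: nat.split)
    have mp2: "map_poly (ev x) [:0,1:] = [:0,1:]"
      by (rule poly_eqI) (simp add: coeff_map_poly rhom_0[OF rhom_ev] rhom_1[OF rhom_ev] coeff_pCons split: nat.split)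
    have "map_poly (ev x) Phi = L"
      unfolding Phi_def L_def
      by (subst minsert_comp'[OF rhom_map_poly[OF rhom_ev]]) (simp add: if_distrib mp mp2 cong: if_cong)
    moreover have "poly L u = 0" for u
    proof -
      have "poly L u = ev (x(n := u)) p"
        unfolding L_def ev_def
        by (subst minsert_comp'[OF rhom_poly]) (rule minsert_cong, auto)
      then show ?thesis using Suc.prems by simp
    qed
    then have "L = 0" using inf by (intro poly_roots_infinite_0) simp
    ultimately have "map_poly (ev x) Phi = 0" by simp
    then have "coeff (map_poly (ev x) Phi) k = 0" by simp
    then show "ev x (coeff Phi k) = 0" by (simp add: coeff_map_poly rhom_0[OF rhom_ev])
  qed
  then have "Phi = 0" by (simp add: poly_eq_iff)
  then show "p = 0" using bk by simp
qed

lemma vanish: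
  fixes p :: "'k::idom mpoly"
  assumes "infinite (UNIV :: 'k set)" "\<And>x. ev x p = 0"
  shows "p = 0"
proof -
  obtain n where "mvars p \<subseteq> {..<n}"
    using finite_mvars[of p] by (meson finite_nat_iff_bounded subset_eq lessThan_iff)
  then show ?thesis using vanish_aux[OF assms(1)] assms(2) by blast
qed

lemma alg_closed_infinite: "infinite (UNIV :: 'a::alg_closed_field set)"
proof
  assume fin: "finite (UNIV :: 'a set)"
  define q :: "'a poly" where "q = (\<Prod>a\<in>UNIV. [:-a, 1:]) + 1"
  have dprod: "degree (\<Prod>a\<in>(UNIV::'a set). [:-a, 1:]) = card (UNIV :: 'a set)"
    by (subst degree_prod_eq_sum_degree) (auto simp: fin)
  have "card (UNIV :: 'a set) > 0" using fin by (simp add: card_gt_0_iff)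
  then have "degree q > 0" unfolding q_def using dprod
    by (subst degree_add_eq_left) auto
  then obtain x where "poly q x = 0" using alg_closed_imp_poly_has_root by blast
  moreover have "poly (\<Prod>a\<in>(UNIV::'a set). [:-a, 1:]) x = 0"
    by (simp add: poly_prod fin)
  ultimately show False by (simp add: q_def)
qed




definition deltaf :: "'a::comm_ring_1 \<Rightarrow> 'a \<Rightarrow> 'a \<Rightarrow> 'a \<Rightarrow> 'a \<Rightarrow> 'a" where
 "deltaf a1 a2 a3 a4 a6 = (let b2 = a1^2 + 4*a2; b4 = 2*a4 + a1*a3; b6 = a3^2 + 4*a6;
    b8 = a1^2*a6 + 4*a2*a6 - a1*a3*a4 + a2*a3^2 - a4^2 in
    - (b2^2*b8) - 8*b4^3 - 27*b6^2 + 9*b2*b4*b6)"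

lemma deltaf_inv: "deltaf (a1 + 2*s) (a2 - s*a1 + 3*r - s^2) (a3 + r*a1 + 2*t)
   (a4 - s*a3 + 2*r*a2 - (t + r*s)*a1 + 3*r^2 - 2*s*t)
   (a6 + r*a4 + r^2*a2 + r^3 - t*a3 - t^2 - r*t*a1) = deltaf a1 a2 a3 a4 (a6::'a::comm_ring_1)"
  unfolding deltaf_def Let_def by (simp add: algebra_simps power2_eq_square power3_eq_cube)

lemma rhom_deltaf: "rhom h \<Longrightarrow> h (deltaf a1 a2 a3 a4 a6) = deltaf (h a1) (h a2) (h a3) (h a4) (h a6)"
  by (simp add: deltaf_def Let_def rhom_simps)

lemma wDelta_deltaf: "wDelta = deltaf wa1 wa2 wa3 wa4 wa6"
  by (simp add: wDelta_def wb2_def wb4_def wb6_def wb8_def deltaf_def Let_def)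

lemma mvars_wDelta: "mvars (wDelta :: 'a::comm_ring_1 mpoly) \<subseteq> {0..4}"
  unfolding wDelta_def wb2_def wb4_def wb6_def wb8_def wa1_def wa2_def wa3_def wa4_def wa6_def
  by (intro MV_intros; simp)

lemma mvars_wa1: "mvars (wa1 :: 'a::comm_ring_1 mpoly) \<subseteq> {0..4}"
  unfolding wa1_def by simp

lemma mvars_wb2: "mvars (wb2 :: 'a::comm_ring_1 mpoly) \<subseteq> {0..4}"
  unfolding wb2_def wa1_def wa2_def by (intro MV_intros; simp)

lemma deltaf_nf1: "deltaf u 0 0 0 e = - (u^6 * e) - 432 * e^2"
  by (simp add: deltaf_def Let_def algebra_simps power2_eq_square power3_eq_cube) (simp add: eval_nat_numeral)

lemma deltaf_nf2: "deltaf 0 B 0 0 e = - 64 * B^3 * e - 432 * e^2"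
  by (simp add: deltaf_def Let_def algebra_simps power2_eq_square power3_eq_cube)

lemma deltaf_fam2: "deltaf 0 0 w 0 0 = - 27 * w^4"
  by (simp add: deltaf_def Let_def algebra_simps power2_eq_square power3_eq_cube) (simp add: eval_nat_numeral)

lemma deltaf_fam3: "deltaf 0 0 0 w 0 = - 64 * w^3"
  by (simp add: deltaf_def Let_def algebra_simps power2_eq_square power3_eq_cube)

lemma char_num0: "CHAR('k::comm_ring_1) dvd n \<Longrightarrow> (of_nat n :: 'k) = 0"
  by (simp add: of_nat_eq_0_iff_char_dvd)

subsection \<open>Evaluation over the algebraic closure\<close>

lemma rhom_Econst: "rhom (\<lambda>c. mConst (to_ac c))"
  using rhom_comp[OF rhom_to_ac rhom_mConst] by (simp add: comp_def)

lemma rhom_to_acp: "rhom to_acp"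
  unfolding to_acp_def[abs_def] by (rule rhom_minsert[OF rhom_Econst])

lemma rhom_gact: "rhom (gact r s t)"
  unfolding gact_def[abs_def] by (rule rhom_minsert[OF rhom_Econst])

lemma ev_to_acp: "ev x (to_acp F) = minsert to_ac x F"
  unfolding to_acp_def by (simp add: ev_minsert rhom_Econst)

lemma ev_gact: "ev x (gact r s t F) = minsert to_ac (\<lambda>i. ev x (gsub r s t i)) F"
  unfolding gact_def by (simp add: ev_minsert rhom_Econst)

lemma to_acp_inj: "to_acp (p :: 'a::field mpoly) = 0 \<Longrightarrow> p = 0"
  unfolding to_acp_def by (rule minsert_hConst_inj[OF inj_to_ac]) simp

lemma rhom_E: "rhom (minsert to_ac x)" by (rule rhom_minsert[OF rhom_to_ac])

lemma E_wa [simp]: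
  "minsert to_ac x wa1 = x 0" "minsert to_ac x wa2 = x 1" "minsert to_ac x wa3 = x 2"
  "minsert to_ac x wa4 = x 3" "minsert to_ac x wa6 = x 4"
  by (simp_all add: wa1_def wa2_def wa3_def wa4_def wa6_def minsert_mVar rhom_to_ac)

lemma E_wDelta: "minsert to_ac x wDelta = deltaf (x 0) (x 1) (x 2) (x 3) (x 4)"
  by (simp add: wDelta_deltaf rhom_deltaf[OF rhom_E])

lemma E_wb2: "minsert to_ac x wb2 = x 0 ^ 2 + 4 * x 1"
  by (simp add: wb2_def rhom_simps[OF rhom_E])

lemma ev_wa [simp]:
  "ev x wa1 = x 0" "ev x wa2 = x 1" "ev x wa3 = x 2" "ev x wa4 = x 3" "ev x wa6 = x 4"
  by (simp_all add: wa1_def wa2_def wa3_def wa4_def wa6_def)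

lemma gpt:
  "ev x (gsub r s t 0) = x 0 + 2*s"
  "ev x (gsub r s t 1) = x 1 - s * x 0 + 3*r - s^2"
  "ev x (gsub r s t 2) = x 2 + r * x 0 + 2*t"
  "ev x (gsub r s t 3) = x 3 - s * x 2 + 2*r*x 1 - (t + r*s) * x 0 + 3*r^2 - 2*s*t"
  "ev x (gsub r s t 4) = x 4 + r * x 3 + r^2 * x 1 + r^3 - t * x 2 - t^2 - r*t*x 0"
  by (simp_all add: gsub_def Let_def rhom_simps[OF rhom_ev])

lemma gsub_other: "i > 4 \<Longrightarrow> gsub r s t i = mVar i"
  by (simp add: gsub_def Let_def)

lemma gact_wa:
  "gact r s t wa1 = gsub r s t 0" "gact r s t wa2 = gsub r s t 1" "gact r s t wa3 = gsub r s t 2"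
  "gact r s t wa4 = gsub r s t 3" "gact r s t wa6 = gsub r s t 4"
  by (simp_all add: gact_def wa1_def wa2_def wa3_def wa4_def wa6_def minsert_mVar rhom_Econst)

lemma to_acp_wa:
  "to_acp wa1 = wa1" "to_acp wa2 = wa2" "to_acp wa3 = wa3" "to_acp wa4 = wa4" "to_acp wa6 = wa6"
  by (simp_all add: to_acp_def wa1_def wa2_def wa3_def wa4_def wa6_def minsert_mVar rhom_Econst)

lemma gact_wDelta: "gact r s t wDelta = to_acp wDelta"
proof -
  have "gact r s t wDelta = deltaf (gsub r s t 0) (gsub r s t 1) (gsub r s t 2) (gsub r s t 3) (gsub r s t 4)"
    by (simp only: wDelta_deltaf rhom_deltaf[OF rhom_gact] gact_wa)
  also have "\<dots> = deltaf wa1 wa2 wa3 wa4 wa6"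
    unfolding gsub_def Let_def by (simp add: deltaf_inv)
  also have "\<dots> = to_acp wDelta"
    by (simp only: wDelta_deltaf rhom_deltaf[OF rhom_to_acp] to_acp_wa)
  finally show ?thesis .
qed




lemma keys01_eq:
  assumes "Poly_Mapping.keys (m :: nat \<Rightarrow>\<^sub>0 nat) \<subseteq> {0,1}"
  shows "m = Poly_Mapping.single 0 (Poly_Mapping.lookup m 0) + Poly_Mapping.single 1 (Poly_Mapping.lookup m 1)"
proof (rule poly_mapping_eqI)
  fix i show "Poly_Mapping.lookup m i = Poly_Mapping.lookup (Poly_Mapping.single 0 (Poly_Mapping.lookup m 0) + Poly_Mapping.single 1 (Poly_Mapping.lookup m 1)) i"
    using assms by (cases "i = 0"; cases "i = 1") (auto simp: lookup_add lookup_single in_keys_iff)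
qed

lemma mon01:
  assumes "Poly_Mapping.keys m \<subseteq> {0,1}"
  shows "mon v m = v 0 ^ Poly_Mapping.lookup m 0 * v 1 ^ Poly_Mapping.lookup m 1"
  by (subst mon_superset[OF _ assms]) simp_all

lemma E_H01:
  assumes "mvars H \<subseteq> {0,1}"
  shows "minsert to_ac v H = (\<Sum>m\<in>Poly_Mapping.keys H. to_ac (Poly_Mapping.lookup H m) *
          (v 0 ^ Poly_Mapping.lookup m 0 * v 1 ^ Poly_Mapping.lookup m 1))"
  unfolding minsert_mon
  by (rule sum.cong[OF refl], subst mon01) (use assms in \<open>auto simp: mvars_def\<close>)

lemma E_poly: "poly (minsert (\<lambda>c. [:to_ac c:]) XP F) u = minsert to_ac (\<lambda>i. poly (XP i) u) F"
  by (subst minsert_comp'[OF rhom_poly]) simp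

lemma rhom_pac: "rhom (\<lambda>c. [:to_ac c:])"
  using rhom_comp[OF rhom_to_ac rhom_pconst] by (simp add: comp_def)

lemma pow_split:
  fixes u y :: "'k::field"
  assumes "u \<noteq> 0" "n + k * b = N + a"
  shows "u ^ N * (u ^ a * (y / u ^ k) ^ b) = u ^ n * y ^ b"
proof -
  have yb: "(y / u ^ k) ^ b = y ^ b / u ^ (k * b)" by (simp add: power_divide power_mult)
  have "u ^ N * (u ^ a * (y / u ^ k) ^ b) = u ^ (N + a) * y ^ b / u ^ (k * b)"
    unfolding yb by (simp add: power_add mult_ac)
  also have "\<dots> = u ^ n * u ^ (k * b) * y ^ b / u ^ (k * b)"
    by (simp add: assms(2)[symmetric] power_add)
  also have "\<dots> = u ^ n * y ^ b" using assms(1) by simp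
  finally show ?thesis .
qed

lemma pole:
  fixes F H A D :: "'a::field mpoly" and c :: 'a and k :: nat and \<kappa> :: "'a alg_closure"
  assumes Hv: "mvars H \<subseteq> {0,1}"
    and Anz: "A \<noteq> 0" and c: "c \<noteq> 0" and k: "k > 0"
    and eqn: "\<And>x. minsert to_ac x A \<noteq> 0 \<Longrightarrow> minsert to_ac x F =
       minsert to_ac (\<lambda>i. if i = 0 then minsert to_ac x A
                           else to_ac c * minsert to_ac x D / (minsert to_ac x A) ^ k) H"
    and fam: "\<And>w. \<exists>XP. (\<forall>u. minsert to_ac (\<lambda>i. poly (XP i) u) A = u) \<and>
                        minsert to_ac (\<lambda>i. poly (XP i) 0) D = \<kappa> * w ^ j"
    and \<kappa>: "\<kappa> \<noteq> 0" and j: "j > 0"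
  shows "F \<in> alg_gen [A, D]"
proof -
  define S where "S = Poly_Mapping.keys H"
  define h where "h = Poly_Mapping.lookup H"
  define d where "d m = int (Poly_Mapping.lookup m 0) - int k * int (Poly_Mapping.lookup m 1)" for m :: "nat \<Rightarrow>\<^sub>0 nat"
  let ?c = "to_ac c"
  have finS: "finite S" by (simp add: S_def)
  have kS: "Poly_Mapping.keys m \<subseteq> {0,1}" if "m \<in> S" for m
    using that Hv by (auto simp: S_def mvars_def)
  have hS: "h m \<noteq> 0" if "m \<in> S" for m using that by (simp add: S_def h_def in_keys_iff)
  have EH: "minsert to_ac v H = (\<Sum>m\<in>S. to_ac (h m) * (v 0 ^ Poly_Mapping.lookup m 0 * v 1 ^ Poly_Mapping.lookup m 1))" for v
    using E_H01[OF Hv] by (simp add: S_def h_def)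
  have infK: "infinite (UNIV :: 'a alg_closure set)" by (rule alg_closed_infinite)
  have nonneg: "\<forall>m\<in>S. d m \<ge> 0"
  proof (rule ccontr)
    assume "\<not> (\<forall>m\<in>S. d m \<ge> 0)"
    then obtain m1 where m1: "m1 \<in> S" "d m1 < 0" by auto
    define d0 where "d0 = Min (d ` S)"
    have d0le: "d0 \<le> d m" if "m \<in> S" for m using that finS by (simp add: d0_def)
    have d0neg: "d0 < 0" using d0le[OF m1(1)] m1(2) by simp
    have "d0 \<in> d ` S" unfolding d0_def by (rule Min_in) (use finS m1(1) in auto)
    then obtain ms where ms: "ms \<in> S" "d ms = d0" by auto
    define N where "N = nat (- d0)"
    have Npos: "N > 0" using d0neg by (simp add: N_def)
    define M0 where "M0 = {m\<in>S. d m = d0}"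
    have ex: "nat (int N + d m) + k * Poly_Mapping.lookup m 1 = N + Poly_Mapping.lookup m 0" if "m \<in> S" for m
    proof -
      have nn: "int N + d m \<ge> 0" using d0le[OF that] d0neg by (simp add: N_def)
      have "int (nat (int N + d m) + k * Poly_Mapping.lookup m 1) = int (N + Poly_Mapping.lookup m 0)"
        using nn d0neg by (simp add: N_def d_def)
      then show ?thesis by (simp only: of_nat_eq_iff)
    qed
    have zero_iff: "nat (int N + d m) = 0 \<longleftrightarrow> m \<in> M0" if "m \<in> S" for m
      using d0le[OF that] d0neg that unfolding N_def M0_def by auto
    have key: "(\<Sum>m\<in>M0. to_ac (h m) * (?c * (\<kappa> * w ^ j)) ^ Poly_Mapping.lookup m 1) = 0" for w
    proof -
      obtain XP where XPA: "\<forall>u. minsert to_ac (\<lambda>i. poly (XP i) u) A = u"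
        and XPD: "minsert to_ac (\<lambda>i. poly (XP i) 0) D = \<kappa> * w ^ j"
        using fam[of w] by blast
      define PF where "PF = minsert (\<lambda>c. [:to_ac c:]) XP F"
      define PD where "PD = minsert (\<lambda>c. [:to_ac c:]) XP D"
      define Q where "Q = (\<Sum>m\<in>S. smult (to_ac (h m)) ([:0,1:] ^ nat (int N + d m) * (smult ?c PD) ^ Poly_Mapping.lookup m 1))"
      have pQ: "poly Q u = (\<Sum>m\<in>S. to_ac (h m) * (u ^ nat (int N + d m) * (?c * minsert to_ac (\<lambda>i. poly (XP i) u) D) ^ Poly_Mapping.lookup m 1))" for u
        by (simp add: Q_def poly_sum PD_def E_poly)
      have "poly ([:0,1:] ^ N * PF) u = poly Q u" if u: "u \<noteq> 0" for u
      proof -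
        let ?x = "\<lambda>i. poly (XP i) u"
        have Ax: "minsert to_ac ?x A = u" using XPA by simp
        have "poly ([:0,1:] ^ N * PF) u = u ^ N * minsert to_ac ?x F"
          by (simp add: PF_def E_poly)
        also have "\<dots> = u ^ N * (\<Sum>m\<in>S. to_ac (h m) * (u ^ Poly_Mapping.lookup m 0 *
              (?c * minsert to_ac ?x D / u ^ k) ^ Poly_Mapping.lookup m 1))"
          using eqn[of ?x] u Ax by (simp add: EH)
        also have "\<dots> = (\<Sum>m\<in>S. to_ac (h m) * (u ^ N * (u ^ Poly_Mapping.lookup m 0 *
              (?c * minsert to_ac ?x D / u ^ k) ^ Poly_Mapping.lookup m 1)))"
          by (simp add: sum_distrib_left mult_ac)
        also have "\<dots> = poly Q u"
          unfolding pQ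
        proof (rule sum.cong[OF refl])
          fix m assume m: "m \<in> S"
          show "to_ac (h m) * (u ^ N * (u ^ Poly_Mapping.lookup m 0 *
              (?c * minsert to_ac ?x D / u ^ k) ^ Poly_Mapping.lookup m 1)) =
            to_ac (h m) * (u ^ nat (int N + d m) * (?c * minsert to_ac ?x D) ^ Poly_Mapping.lookup m 1)"
            by (subst pow_split[OF u ex[OF m]]) (rule refl)
        qed
        finally show ?thesis .
      qed
      then have "{u. u \<noteq> 0} \<subseteq> {u. poly ([:0,1:] ^ N * PF - Q) u = 0}" by auto
      moreover have "infinite {u :: 'a alg_closure. u \<noteq> 0}"
        using infK by (simp add: infinite_remove[of UNIV 0, simplified] Collect_neg_eq[symmetric] Compl_eq_Diff_UNIV)
      ultimately have "infinite {u. poly ([:0,1:] ^ N * PF - Q) u = 0}" using finite_subset by blast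
      then have "[:0,1:] ^ N * PF - Q = 0" by (rule poly_roots_infinite_0)
      then have "poly ([:0,1:] ^ N * PF) 0 = poly Q 0" by simp
      then have "0 = (\<Sum>m\<in>S. to_ac (h m) * (0 ^ nat (int N + d m) * (?c * (\<kappa> * w ^ j)) ^ Poly_Mapping.lookup m 1))"
        using Npos XPD by (simp add: pQ power_0_left)
      also have "\<dots> = (\<Sum>m\<in>S. if m \<in> M0 then to_ac (h m) * (?c * (\<kappa> * w ^ j)) ^ Poly_Mapping.lookup m 1 else 0)"
      proof (rule sum.cong[OF refl])
        fix m assume m: "m \<in> S"
        show "to_ac (h m) * (0 ^ nat (int N + d m) * (?c * (\<kappa> * w ^ j)) ^ Poly_Mapping.lookup m 1) =
          (if m \<in> M0 then to_ac (h m) * (?c * (\<kappa> * w ^ j)) ^ Poly_Mapping.lookup m 1 else 0)"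
        proof (cases "m \<in> M0")
          case True
          then have "nat (int N + d m) = 0" using zero_iff[OF m] by blast
          then show ?thesis using True by simp
        next
          case False
          then have "nat (int N + d m) \<noteq> 0" using zero_iff[OF m] by blast
          then show ?thesis using False by simp
        qed
      qed
      also have "\<dots> = (\<Sum>m\<in>M0. to_ac (h m) * (?c * (\<kappa> * w ^ j)) ^ Poly_Mapping.lookup m 1)"
        using finS by (simp add: sum.If_cases M0_def Int_def)
      finally show ?thesis by simp
    qed
    define Qz where "Qz = (\<Sum>m\<in>M0. monom (to_ac (h m)) (Poly_Mapping.lookup m 1))"
    have "poly Qz z = 0" for z
    proof -
      have cz: "?c * \<kappa> \<noteq> 0" using c \<kappa> by simp
      obtain w where w: "w ^ j = z / (?c * \<kappa>)" using nth_root_exists[OF j] by blast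
      have "?c * (\<kappa> * w ^ j) = z" using cz by (simp add: w)
      then show ?thesis using key[of w] by (simp add: Qz_def poly_sum poly_monom mult_ac)
    qed
    then have Qz0: "Qz = 0" using infK by (intro poly_roots_infinite_0) simp
    have msM0: "ms \<in> M0" using ms by (simp add: M0_def)
    have inj: "m = ms" if "m \<in> M0" "Poly_Mapping.lookup m 1 = Poly_Mapping.lookup ms 1" for m
    proof -
      have "Poly_Mapping.lookup m 0 = Poly_Mapping.lookup ms 0"
        using that ms unfolding M0_def d_def by auto
      then show ?thesis using that keys01_eq[OF kS[of m]] keys01_eq[OF kS[OF ms(1)]]
        by (simp add: M0_def)
    qed
    have "coeff Qz (Poly_Mapping.lookup ms 1) = (\<Sum>m\<in>M0. if m = ms then to_ac (h m) else 0)"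
      unfolding Qz_def coeff_sum coeff_monom
      by (rule sum.cong[OF refl]) (use inj in auto)
    also have "\<dots> = to_ac (h ms)" using msM0 finS by (simp add: M0_def)
    finally have "h ms = 0" using Qz0 by simp
    then show False using hS[OF ms(1)] by simp
  qed
  define P where "P = (\<Sum>m\<in>S. mConst (h m * c ^ Poly_Mapping.lookup m 1) * mVar 0 ^ nat (d m) * mVar 1 ^ Poly_Mapping.lookup m 1)"
  define g where "g = (\<lambda>i. if i < length [A, D] then [A, D] ! i else 0)"
  have Pv: "mvars P \<subseteq> {..<length [A, D]}"
  proof -
    have "P \<in> {p. mvars p \<subseteq> {..<length [A, D]}}" unfolding P_def
      by (rule sclosed_sum[OF sclosed_MV]) (simp, intro MV_intros; simp)
    then show ?thesis by simp
  qed
  define F' where "F' = minsert mConst g P"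
  have F'eq: "F' = (\<Sum>m\<in>S. mConst (h m * c ^ Poly_Mapping.lookup m 1) * A ^ nat (d m) * D ^ Poly_Mapping.lookup m 1)"
    unfolding F'_def P_def
    by (simp add: minsert_sum[OF rhom_mConst] minsert_mult[OF rhom_mConst] minsert_mConst[OF rhom_mConst]
        rhom_power[OF rhom_minsert[OF rhom_mConst]] minsert_mVar[OF rhom_mConst] g_def)
  have "ev x (to_acp (A * (F - F'))) = 0" for x
  proof -
    let ?a = "minsert to_ac x A" and ?e = "minsert to_ac x D"
    have "ev x (to_acp (A * (F - F'))) = ?a * (minsert to_ac x F - minsert to_ac x F')"
      by (simp add: ev_to_acp rhom_simps[OF rhom_E])
    moreover have "minsert to_ac x F = minsert to_ac x F'" if a: "?a \<noteq> 0"
    proof -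
      have "minsert to_ac x F = (\<Sum>m\<in>S. to_ac (h m) * (?a ^ Poly_Mapping.lookup m 0 * (?c * ?e / ?a ^ k) ^ Poly_Mapping.lookup m 1))"
        using eqn[OF a] by (simp add: EH)
      also have "\<dots> = (\<Sum>m\<in>S. to_ac (h m) * (?c ^ Poly_Mapping.lookup m 1 * ?a ^ nat (d m) * ?e ^ Poly_Mapping.lookup m 1))"
      proof (rule sum.cong[OF refl])
        fix m assume m: "m \<in> S"
        have ex0: "nat (d m) + k * Poly_Mapping.lookup m 1 = 0 + Poly_Mapping.lookup m 0"
        proof -
          have nn: "d m \<ge> 0" using nonneg m by auto
          have "int (nat (d m) + k * Poly_Mapping.lookup m 1) = int (0 + Poly_Mapping.lookup m 0)"
            using nn by (simp add: d_def)
          then show ?thesis by (simp only: of_nat_eq_iff)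
        qed
        have "?a ^ Poly_Mapping.lookup m 0 * (?c * ?e / ?a ^ k) ^ Poly_Mapping.lookup m 1 = ?a ^ nat (d m) * (?c * ?e) ^ Poly_Mapping.lookup m 1"
          using pow_split[OF a ex0, of "?c * ?e"] by simp
        then show "to_ac (h m) * (?a ^ Poly_Mapping.lookup m 0 * (?c * ?e / ?a ^ k) ^ Poly_Mapping.lookup m 1) =
            to_ac (h m) * (?c ^ Poly_Mapping.lookup m 1 * ?a ^ nat (d m) * ?e ^ Poly_Mapping.lookup m 1)"
          by (simp add: power_mult_distrib mult_ac)
      qed
      also have "\<dots> = minsert to_ac x F'"
        unfolding F'eq by (simp add: rhom_sum[OF rhom_E] rhom_simps[OF rhom_E] minsert_mConst[OF rhom_to_ac] mult_ac)
      finally show ?thesis .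
    qed
    ultimately show ?thesis by (cases "?a = 0") simp_all
  qed
  then have "to_acp (A * (F - F')) = 0" by (intro vanish[OF alg_closed_infinite])
  then have "A * (F - F') = 0" by (rule to_acp_inj)
  then have "F = F'" using Anz by simp
  then show ?thesis unfolding alg_gen_def using Pv F'_def g_def by blast
qed




lemma charK_num:
  "(numeral n :: 'a::field alg_closure) = 0 \<longleftrightarrow> CHAR('a) dvd numeral n"
  using of_nat_eq_0_iff_char_dvd[of "numeral n", where 'a="'a alg_closure"] by simp

lemma quad_root: "\<exists>s::'k::alg_closed_field. s^2 + b*s + c = 0"
proof -
  have "degree [:c, b, 1:] > 0" by simp
  then obtain s where "poly [:c, b, 1:] s = (0::'k)" using alg_closed_imp_poly_has_root by blast
  then have "s^2 + b*s + c = 0" by (simp add: algebra_simps power2_eq_square)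
  then show ?thesis by blast
qed

lemma alg_gen_sub:
  assumes "\<And>i. i < length gs \<Longrightarrow> mvars (gs ! i) \<subseteq> {0..4}"
    and "\<And>i r s t. i < length gs \<Longrightarrow> gact r s t (gs ! i) = to_acp (gs ! i)"
  shows "alg_gen gs \<subseteq> (G1_invariants :: 'a::field mpoly set)"
proof
  fix F :: "'a mpoly" assume "F \<in> alg_gen gs"
  then obtain P where P: "mvars P \<subseteq> {..<length gs}"
    and F: "F = minsert mConst (\<lambda>i. if i < length gs then gs ! i else 0) P"
    by (auto simp: alg_gen_def)
  define g where "g = (\<lambda>i. if i < length gs then gs ! i else (0 :: 'a mpoly))"
  have "F \<in> {p. mvars p \<subseteq> {0..4}}" unfolding F
    by (rule minsert_in[OF sclosed_MV]) (use assms(1) in auto)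
  then have "F \<in> KX1" by (simp add: KX1_def)
  moreover have "gact r s t F = to_acp F" for r s t
  proof -
    have gi: "gact r s t (g i) = to_acp (g i)" for i
      using assms(2) by (simp add: g_def rhom_0[OF rhom_gact] rhom_0[OF rhom_to_acp])
    have "gact r s t F = minsert (\<lambda>c. gact r s t (mConst c)) (\<lambda>i. gact r s t (g i)) P"
      unfolding F g_def[symmetric] by (rule minsert_comp'[OF rhom_gact])
    also have "\<dots> = minsert (\<lambda>c. to_acp (mConst c)) (\<lambda>i. to_acp (g i)) P"
    proof -
      have gc: "gact r s t (mConst c) = to_acp (mConst c)" for c :: 'a
        by (simp add: gact_def to_acp_def minsert_mConst rhom_Econst)
      show ?thesis by (simp only: gi gc)
    qed
    also have "\<dots> = to_acp F"
      unfolding F g_def[symmetric] by (rule minsert_comp'[OF rhom_to_acp, symmetric])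
    finally show ?thesis .
  qed
  ultimately show "F \<in> G1_invariants" by (simp add: G1_invariants_def)
qed

lemma mConst_num0: "(numeral n :: 'k::comm_ring_1) = 0 \<Longrightarrow> numeral n * mConst (r::'k) = 0"
proof -
  assume h: "(numeral n :: 'k) = 0"
  have "numeral n * mConst r = mConst (numeral n * r)"
    by (simp add: rhom_mult[OF rhom_mConst] rhom_numeral[OF rhom_mConst])
  then show ?thesis using h by (simp add: mConst_def)
qed

lemma gact_wa1_char2:
  assumes "CHAR('a::field) = 2"
  shows "gact r s t (wa1 :: 'a mpoly) = to_acp wa1"
proof -
  have "(2::'a alg_closure) = 0" using charK_num[where 'a='a, of "num.Bit0 num.One"] assms by simp
  then show ?thesis by (simp add: gact_wa to_acp_wa gsub_def Let_def mConst_num0)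
qed

lemma wb2_gen: "(a + 2*S)^2 + 4*(b - S*a + 3*R - S^2) = a^2 + 4*b + 12*(R::'k::comm_ring_1)"
  by (simp add: algebra_simps power2_eq_square)

lemma gsub01:
  "gsub r s t 0 = wa1 + 2 * mConst s"
  "gsub r s t 1 = wa2 - mConst s * wa1 + 3 * mConst r - (mConst s)^2"
  by (simp_all add: gsub_def Let_def)

lemma gact_wb2_char3:
  assumes "CHAR('a::field) = 3"
  shows "gact r s t (wb2 :: 'a mpoly) = to_acp wb2"
proof -
  have "(12::'a alg_closure) = 0" using charK_num[where 'a='a, of "num.Bit0 (num.Bit0 (num.Bit1 num.One))"] assms by simp
  have "gact r s t wb2 = (gsub r s t 0)^2 + 4 * gsub r s t 1"
    by (simp add: wb2_def rhom_simps[OF rhom_gact] gact_wa)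
  also have "\<dots> = wa1^2 + 4*wa2 + 12 * mConst r"
    by (simp only: gsub01 wb2_gen)
  also have "\<dots> = to_acp wb2"
    using \<open>(12::'a alg_closure) = 0\<close>
    by (simp add: wb2_def rhom_simps[OF rhom_to_acp] to_acp_wa mConst_num0)
  finally show ?thesis .
qed




lemma charK_nat:
  "(of_nat n :: 'a::field alg_closure) = 0 \<longleftrightarrow> CHAR('a) dvd n"
  using of_nat_eq_0_iff_char_dvd[of n, where 'a="'a alg_closure"] by simp

lemma E_mConst: "minsert to_ac v (mConst c) = to_ac c"
  by (simp add: minsert_mConst rhom_to_ac)
lemma E_mVar: "minsert to_ac v (mVar i) = v i"
  by (simp add: minsert_mVar rhom_to_ac)

lemma E_subst:
  "minsert to_ac v (minsert mConst nsub F) = minsert to_ac (\<lambda>i. minsert to_ac v (nsub i)) F"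
  by (subst minsert_comp'[OF rhom_E]) (simp add: E_mConst)

lemma inv_pt:
  assumes "F \<in> G1_invariants"
  shows "minsert to_ac (\<lambda>i. ev x (gsub r s t i)) F = minsert to_ac x F"
proof -
  have "gact r s t F = to_acp F" using assms by (simp add: G1_invariants_def)
  then have "ev x (gact r s t F) = ev x (to_acp F)" by simp
  then show ?thesis by (simp add: ev_gact ev_to_acp)
qed

lemma inv_mvars: "F \<in> G1_invariants \<Longrightarrow> mvars F \<subseteq> {0..4}"
  by (simp add: G1_invariants_def KX1_def)

lemma mVar_nz: "(mVar i :: 'a::comm_ring_1 mpoly) \<noteq> 0"
proof
  assume "(mVar i :: 'a mpoly) = 0"
  then have "Poly_Mapping.lookup (mVar i :: 'a mpoly) (Poly_Mapping.single i 1) = 0" by simp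
  then show False by (simp add: mVar_def)
qed

lemma y3_id: "x3 - s*x2 + 2*r*x1 - (t + r*s)*x0 + 3*r^2 - 2*s*t
   = (x3 - s*x2 + 3*r^2 - r*s*x0 - t*x0) + 2*(r*x1 - s*t :: 'k::comm_ring_1)"
  by (simp add: algebra_simps)

lemma char2_sub:
  fixes F :: "'a::field mpoly"
  assumes ch: "CHAR('a) = 2" and F: "F \<in> G1_invariants"
  shows "F \<in> alg_gen [wa1, wDelta]"
proof -
  have two: "(2::'a alg_closure) = 0" using charK_nat[where 'a='a, of 2] ch by simp
  have c432: "(432::'a alg_closure) = 0" using charK_nat[where 'a='a, of 432] ch by simp
  have c28: "(28::'a alg_closure) = 0" using charK_nat[where 'a='a, of 28] ch by simp
  have negid: "- z = z" for z :: "'a alg_closure"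
  proof -
    have "z + z = 2 * z" by simp
    then have "z + z = 0" using two by simp
    then show ?thesis by (simp add: add_eq_0_iff eq_neg_iff_add_eq_0)
  qed
  have Fv: "mvars F \<subseteq> {0..4}" using F by (rule inv_mvars)
  define nsub where "nsub (i::nat) = (if i = 0 then mVar 0 else if i = 4 then mVar 1 else (0::'a mpoly))" for i
  define H where "H = minsert mConst nsub F"
  have "H \<in> {p. mvars p \<subseteq> {0,1}}" unfolding H_def
    by (rule minsert_in[OF sclosed_MV]) (auto simp: nsub_def)
  then have Hv: "mvars H \<subseteq> {0,1}" by simp
  have EH: "minsert to_ac v H = minsert to_ac (\<lambda>i. if i = 0 then v 0 else if i = 4 then v 1 else 0) F" for v
    unfolding H_def E_subst
    by (rule minsert_cong) (auto simp: nsub_def E_mVar rhom_0[OF rhom_E])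
  show ?thesis
  proof (rule pole[where H=H and c=1 and k=6 and \<kappa>=1 and j=4])
    show "mvars H \<subseteq> {0,1}" by (rule Hv)
    show "(wa1 :: 'a mpoly) \<noteq> 0" by (simp add: wa1_def mVar_nz)
    show "(1::'a) \<noteq> 0" by simp
    show "(6::nat) > 0" by simp
    show "(1:: 'a alg_closure) \<noteq> 0" by simp
    show "(4::nat) > 0" by simp
  next
    fix x :: "nat \<Rightarrow> 'a alg_closure"
    assume "minsert to_ac x wa1 \<noteq> 0"
    then have x0: "x 0 \<noteq> 0" by simp
    define r where "r = - x 2 / x 0"
    obtain s where sr: "s^2 + x 0 * s + (- (x 1 + 3*r)) = 0" using quad_root by blast
    define t where "t = (x 3 - s * x 2 + 3*r^2 - r*s*x 0) / x 0"
    define y where "y i = ev x (gsub r s t i)" for i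
    have rx: "r * x 0 = - x 2" using x0 by (simp add: r_def)
    have tx: "t * x 0 = x 3 - s * x 2 + 3*r^2 - r*s*x 0" using x0 by (simp add: t_def)
    have y0: "y 0 = x 0" using two by (simp add: y_def gpt)
    have y1: "y 1 = 0"
    proof -
      have e: "y 1 = - (s^2 + x 0 * s + (- (x 1 + 3*r)))" by (simp only: y_def gpt) (simp add: algebra_simps)
      show ?thesis unfolding e sr by simp
    qed
    have y2: "y 2 = 0"
    proof -
      have "y 2 = (x 2 + r * x 0) + 2 * t" by (simp add: y_def gpt)
      then show ?thesis using rx two by simp
    qed
    have y3: "y 3 = 0"
    proof -
      have "y 3 = (x 3 - s*x 2 + 3*r^2 - r*s*x 0 - t*x 0) + 2*(r*x 1 - s*t)"
        by (simp only: y_def gpt y3_id)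
      then show ?thesis using tx two by simp
    qed
    have "deltaf (x 0) 0 0 0 (y 4) = deltaf (y 0) (y 1) (y 2) (y 3) (y 4)"
      by (simp only: y0 y1 y2 y3)
    also have "\<dots> = deltaf (x 0) (x 1) (x 2) (x 3) (x 4)"
      by (simp only: y_def gpt deltaf_inv)
    also have "\<dots> = minsert to_ac x wDelta"
      by (simp add: E_wDelta)
    finally have "deltaf (x 0) 0 0 0 (y 4) = minsert to_ac x wDelta" .
    then have "x 0 ^ 6 * y 4 = minsert to_ac x wDelta"
      by (simp add: deltaf_nf1 c432 negid)
    then have y4: "y 4 = 1 * minsert to_ac x wDelta / x 0 ^ 6" using x0
      by (simp add: field_simps)
    have yfun: "y = (\<lambda>i. ev x (gsub r s t i))" by (rule ext) (simp add: y_def)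
    have "minsert to_ac x F = minsert to_ac y F" unfolding yfun using inv_pt[OF F, of x r s t] by simp
    also have "\<dots> = minsert to_ac (\<lambda>i. if i = 0 then x 0 else if i = 4 then y 4 else 0) F"
    proof (rule minsert_cong)
      fix i assume "i \<in> mvars F"
      then have "i \<in> {0..4}" using Fv by auto
      then have "i = 0 \<or> i = 1 \<or> i = 2 \<or> i = 3 \<or> i = 4" by auto
      then show "y i = (if i = 0 then x 0 else if i = 4 then y 4 else 0)"
        using y0 y1 y2 y3 by auto
    qed simp
    also have "\<dots> = minsert to_ac (\<lambda>i. if i = 0 then minsert to_ac x wa1
                   else to_ac 1 * minsert to_ac x wDelta / minsert to_ac x wa1 ^ 6) H"
      unfolding EH by (rule minsert_cong) (simp_all add: y4 E_wa(1))
    finally show "minsert to_ac x F = minsert to_ac (\<lambda>i. if i = 0 then minsert to_ac x wa1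
                   else to_ac 1 * minsert to_ac x wDelta / minsert to_ac x wa1 ^ 6) H" .
  next
    fix w :: "'a alg_closure"
    define XP where "XP (i::nat) = (if i = 0 then [:0,1:] else if i = 2 then [:w:] else 0)" for i
    have "minsert to_ac (\<lambda>i. poly (XP i) u) wa1 = u" for u by (simp add: XP_def)
    moreover have "minsert to_ac (\<lambda>i. poly (XP i) 0) wDelta = 1 * w ^ 4"
    proof -
      have "minsert to_ac (\<lambda>i. poly (XP i) 0) wDelta = deltaf 0 0 w 0 0"
        by (simp add: E_wDelta XP_def)
      also have "\<dots> = - 27 * w ^ 4" by (rule deltaf_fam2)
      also have "\<dots> = 1 * w ^ 4"
      proof -
        have "(-27 :: 'a alg_closure) = 1 - 28" by simp
        then show ?thesis using c28 by simp
      qed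
      finally show ?thesis .
    qed
    ultimately show "\<exists>XP. (\<forall>u. minsert to_ac (\<lambda>i. poly (XP i) u) wa1 = u) \<and>
                        minsert to_ac (\<lambda>i. poly (XP i) 0) wDelta = 1 * w ^ 4" by blast
  qed
qed

lemma y3_id3: "x3 - s*x2 + 2*r*x1 - (t + r*s)*x0 + 3*r^2 - 2*s*t
   = (x3 - s*x2 + r*(2*x1 - s*x0)) - t*(x0 + 2*s) + 3*(r^2 :: 'k::comm_ring_1)"
  by (simp add: algebra_simps)

lemma y1_id3: "4 * (x1 - s*x0 + 3*r - s^2) = (x0^2 + 4*x1) + 12*r - (x0 + 2*s)^2 * (1::'k::comm_ring_1)"
  by (simp add: algebra_simps power2_eq_square)

lemma char3_sub:
  fixes F :: "'a::field mpoly"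
  assumes ch: "CHAR('a) = 3" and F: "F \<in> G1_invariants"
  shows "F \<in> alg_gen [wb2, wDelta]"
proof -
  have three: "(3::'a alg_closure) = 0" using charK_nat[where 'a='a, of 3] ch by simp
  have c12: "(12::'a alg_closure) = 0" using charK_nat[where 'a='a, of 12] ch by simp
  have c432: "(432::'a alg_closure) = 0" using charK_nat[where 'a='a, of 432] ch by simp
  have c63: "(63::'a alg_closure) = 0" using charK_nat[where 'a='a, of 63] ch by simp
  have two: "(2::'a alg_closure) \<noteq> 0" using charK_nat[where 'a='a, of 2] ch by simp
  have four: "4 * z = z" for z :: "'a alg_closure"
  proof -
    have "4 * z = z + 3 * z" by simp
    then show ?thesis using three by simp
  qed
  have m64: "- 64 * z = - z" for z :: "'a alg_closure"
  proof -
    have "- 64 * z = - z - 63 * z" by simp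
    then show ?thesis using c63 by simp
  qed
  have p64: "64 * z = z" for z :: "'a alg_closure"
  proof -
    have "64 * z = z + 63 * z" by simp
    then show ?thesis using c63 by simp
  qed
  have Fv: "mvars F \<subseteq> {0..4}" using F by (rule inv_mvars)
  define nsub where "nsub (i::nat) = (if i = 1 then mVar 0 else if i = 4 then mVar 1 else (0::'a mpoly))" for i
  define H where "H = minsert mConst nsub F"
  have "H \<in> {p. mvars p \<subseteq> {0,1}}" unfolding H_def
    by (rule minsert_in[OF sclosed_MV]) (auto simp: nsub_def)
  then have Hv: "mvars H \<subseteq> {0,1}" by simp
  have EH: "minsert to_ac v H = minsert to_ac (\<lambda>i. if i = 1 then v 0 else if i = 4 then v 1 else 0) F" for v
    unfolding H_def E_subst
    by (rule minsert_cong) (auto simp: nsub_def E_mVar rhom_0[OF rhom_E])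
  show ?thesis
  proof (rule pole[where H=H and c="-1" and k=3 and \<kappa>="-1" and j=3])
    show "mvars H \<subseteq> {0,1}" by (rule Hv)
    show "(wb2 :: 'a mpoly) \<noteq> 0"
    proof
      assume "(wb2 :: 'a mpoly) = 0"
      then have "minsert to_ac (\<lambda>i. if i = 1 then 1 else 0) (wb2 :: 'a mpoly) = 0"
        by (simp add: rhom_0[OF rhom_E])
      then have "(4 :: 'a alg_closure) = 0" by (simp add: E_wb2)
      then show False using four[of 1] by simp
    qed
    show "(-1::'a) \<noteq> 0" by simp
    show "(3::nat) > 0" by simp
    show "(-1:: 'a alg_closure) \<noteq> 0" by simp
    show "(3::nat) > 0" by simp
  next
    fix x :: "nat \<Rightarrow> 'a alg_closure"
    define b where "b = x 0 ^ 2 + 4 * x 1"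
    assume "minsert to_ac x wb2 \<noteq> 0"
    then have bnz: "b \<noteq> 0" by (simp add: E_wb2 b_def)
    define s where "s = - x 0 / 2"
    have s2: "x 0 + 2 * s = 0" using two by (simp add: s_def)
    define q where "q = 2 * x 1 - s * x 0"
    have s2': "2 * s = - x 0" using two by (simp add: s_def)
    have "2 * q = 4 * x 1 - (2 * s) * x 0" by (simp add: q_def algebra_simps)
    also have "\<dots> = b" unfolding s2' by (simp add: b_def power2_eq_square)
    finally have "2 * q = b" .
    then have qnz: "q \<noteq> 0" using bnz by auto
    define r where "r = - (x 3 - s * x 2) / q"
    have rq: "r * q = - (x 3 - s * x 2)" using qnz by (simp add: r_def)
    define t where "t = - (x 2 + r * x 0) / 2"
    have t2: "2 * t = - (x 2 + r * x 0)" using two by (simp add: t_def)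
    define y where "y i = ev x (gsub r s t i)" for i
    have y0: "y 0 = 0" using s2 by (simp add: y_def gpt)
    have y2: "y 2 = 0"
    proof -
      have "y 2 = (x 2 + r * x 0) + 2 * t" by (simp add: y_def gpt)
      then show ?thesis using t2 by simp
    qed
    have y3: "y 3 = 0"
    proof -
      have "y 3 = (x 3 - s*x 2 + r*q) - t*(x 0 + 2*s) + 3*r^2"
        by (simp only: y_def gpt y3_id3 q_def[symmetric])
      then show ?thesis using rq s2 three by simp
    qed
    have y1: "y 1 = b"
    proof -
      have "4 * y 1 = b + 12 * r - (x 0 + 2*s)^2 * 1"
        by (simp only: y_def gpt y1_id3 b_def)
      then show ?thesis using s2 c12 four by simp
    qed
    have "deltaf 0 b 0 0 (y 4) = deltaf (y 0) (y 1) (y 2) (y 3) (y 4)"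
      by (simp only: y0 y1 y2 y3)
    also have "\<dots> = deltaf (x 0) (x 1) (x 2) (x 3) (x 4)"
      by (simp only: y_def gpt deltaf_inv)
    also have "\<dots> = minsert to_ac x wDelta"
      by (simp add: E_wDelta)
    finally have "deltaf 0 b 0 0 (y 4) = minsert to_ac x wDelta" .
    then have "- (b ^ 3 * y 4) = minsert to_ac x wDelta"
      by (simp add: deltaf_nf2 c432 p64 mult.assoc)
    then have "b ^ 3 * y 4 = - minsert to_ac x wDelta" by (metis minus_minus)
    then have y4: "y 4 = to_ac (-1) * minsert to_ac x wDelta / b ^ 3" using bnz
      by (simp add: field_simps)
    have yfun: "y = (\<lambda>i. ev x (gsub r s t i))" by (rule ext) (simp add: y_def)
    have "minsert to_ac x F = minsert to_ac y F" unfolding yfun using inv_pt[OF F, of x r s t] by simp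
    also have "\<dots> = minsert to_ac (\<lambda>i. if i = 1 then b else if i = 4 then y 4 else 0) F"
    proof (rule minsert_cong)
      fix i assume "i \<in> mvars F"
      then have "i \<in> {0..4}" using Fv by auto
      then have "i = 0 \<or> i = 1 \<or> i = 2 \<or> i = 3 \<or> i = 4" by auto
      then show "y i = (if i = 1 then b else if i = 4 then y 4 else 0)"
        using y0 y1 y2 y3 by auto
    qed simp
    also have "\<dots> = minsert to_ac (\<lambda>i. if i = 0 then minsert to_ac x wb2
                   else to_ac (-1) * minsert to_ac x wDelta / minsert to_ac x wb2 ^ 3) H"
      unfolding EH by (rule minsert_cong) (simp_all add: y4 E_wb2 b_def)
    finally show "minsert to_ac x F = minsert to_ac (\<lambda>i. if i = 0 then minsert to_ac x wb2
                   else to_ac (-1) * minsert to_ac x wDelta / minsert to_ac x wb2 ^ 3) H" .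
  next
    fix w :: "'a alg_closure"
    define XP where "XP (i::nat) = (if i = 1 then [:0,1:] else if i = 3 then [:w:] else 0)" for i
    have "minsert to_ac (\<lambda>i. poly (XP i) u) wb2 = u" for u by (simp add: XP_def E_wb2 four)
    moreover have "minsert to_ac (\<lambda>i. poly (XP i) 0) wDelta = - 1 * w ^ 3"
    proof -
      have "minsert to_ac (\<lambda>i. poly (XP i) 0) wDelta = deltaf 0 0 0 w 0"
        by (simp add: E_wDelta XP_def)
      also have "\<dots> = - 64 * w ^ 3" by (rule deltaf_fam3)
      also have "\<dots> = - 1 * w ^ 3" using p64[of "w ^ 3"] by (simp only: mult_minus_left) simp
      finally show ?thesis .
    qed
    ultimately show "\<exists>XP. (\<forall>u. minsert to_ac (\<lambda>i. poly (XP i) u) wb2 = u) \<and>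
                        minsert to_ac (\<lambda>i. poly (XP i) 0) wDelta = - 1 * w ^ 3" by blast
  qed
qed


theorem lemma10p1:
  assumes "perfect_field TYPE('a::field)"
  shows "(CHAR('a) = 2 \<longrightarrow> (G1_invariants :: 'a mpoly set) = alg_gen [wa1, wDelta])
       \<and> (CHAR('a) = 3 \<longrightarrow> (G1_invariants :: 'a mpoly set) = alg_gen [wb2, wDelta])"
proof (intro conjI impI)
  assume ch: "CHAR('a) = 2"
  show "(G1_invariants :: 'a mpoly set) = alg_gen [wa1, wDelta]"
  proof
    show "(G1_invariants :: 'a mpoly set) \<subseteq> alg_gen [wa1, wDelta]" using char2_sub[OF ch] by blast
    show "alg_gen [wa1, wDelta] \<subseteq> (G1_invariants :: 'a mpoly set)"
    proof (rule alg_gen_sub)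
      fix i assume "i < length [wa1, wDelta :: 'a mpoly]"
      then have "i = 0 \<or> i = 1" by auto
      then show "mvars ([wa1, wDelta :: 'a mpoly] ! i) \<subseteq> {0..4}"
        using mvars_wa1 mvars_wDelta by auto
    next
      fix i r s t assume "i < length [wa1, wDelta :: 'a mpoly]"
      then have "i = 0 \<or> i = 1" by auto
      then show "gact r s t ([wa1, wDelta :: 'a mpoly] ! i) = to_acp ([wa1, wDelta :: 'a mpoly] ! i)"
        using gact_wa1_char2[OF ch] gact_wDelta by auto
    qed
  qed
next
  assume ch: "CHAR('a) = 3"
  show "(G1_invariants :: 'a mpoly set) = alg_gen [wb2, wDelta]"
  proof
    show "(G1_invariants :: 'a mpoly set) \<subseteq> alg_gen [wb2, wDelta]" using char3_sub[OF ch] by blast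
    show "alg_gen [wb2, wDelta] \<subseteq> (G1_invariants :: 'a mpoly set)"
    proof (rule alg_gen_sub)
      fix i assume "i < length [wb2, wDelta :: 'a mpoly]"
      then have "i = 0 \<or> i = 1" by auto
      then show "mvars ([wb2, wDelta :: 'a mpoly] ! i) \<subseteq> {0..4}"
        using mvars_wb2 mvars_wDelta by auto
    next
      fix i r s t assume "i < length [wb2, wDelta :: 'a mpoly]"
      then have "i = 0 \<or> i = 1" by auto
      then show "gact r s t ([wb2, wDelta :: 'a mpoly] ! i) = to_acp ([wb2, wDelta :: 'a mpoly] ! i)"
        using gact_wb2_char3[OF ch] gact_wDelta by auto
    qed
  qed
qed

end
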